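(* Let $f$ be a 3-CNF formula with clauses $C_1,\dots,C_m$ over variables $x_1,\dots,x_n$, each clause being a disjunction of three literal occurrences. Let $G$ be the graph constructed as follows: for each clause $C_i=x\vee y\vee z$ introduce four vertices $x^i,y^i,z^i,c^i$ forming a clique $G_i$, where $x^i,y^i,z^i$ are associated with the literals $x,y,z$ of $C_i$ (so $G$ has $4m$ vertices); additionally, for any two vertices $u,v$ in different cliques $G_i\ne G_j$ such that the literal associated with $u$ is the negation of the literal associated with $v$, add the edge $uv$. Then $\alpha(G)=m$, $\mathrm{diss}(G)=\alpha(G)+\nu_s(G)$, and $$f\text{ is satisfiable}\iff \mathrm{diss}(G)=2\alpha(G)\iff \mathrm{diss}(G)=2\nu_s(G).$$
   Context: All graphs are finite, simple and undirected. A set $I$ of vertices of a graph $G$ is a dissociation set if the induced subgraph $G[I]$ has maximum degree at most $1$; $\mathrm{diss}(G)$ is the maximum order of a dissociation set in $G$. $\alpha(G)$ is the independence number. An induced matching is a matching $N$ such that the subgraph of $G$ induced by the vertices covered by $N$ has edge set exactly $N$; $\nu_s(G)$ is the maximum size of an induced matching in $G$. *)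

theory Defs
  imports Main
begin

definition independent_set :: "'v set \<Rightarrow> ('v \<Rightarrow> 'v \<Rightarrow> bool) \<Rightarrow> 'v set \<Rightarrow> bool" where
  "independent_set V E I \<longleftrightarrow> I \<subseteq> V \<and> (\<forall>u\<in>I. \<forall>v\<in>I. \<not> E u v)"

definition indep_number :: "'v set \<Rightarrow> ('v \<Rightarrow> 'v \<Rightarrow> bool) \<Rightarrow> nat" where
  "indep_number V E = Max {card I | I. independent_set V E I}"

definition dissociation_set :: "'v set \<Rightarrow> ('v \<Rightarrow> 'v \<Rightarrow> bool) \<Rightarrow> 'v set \<Rightarrow> bool" where
  "dissociation_set V E I \<longleftrightarrow> I \<subseteq> V \<and> (\<forall>u\<in>I. card {v\<in>I. E u v} \<le> 1)"

definition diss :: "'v set \<Rightarrow> ('v \<Rightarrow> 'v \<Rightarrow> bool) \<Rightarrow> nat" where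
  "diss V E = Max {card I | I. dissociation_set V E I}"

definition induced_matching :: "'v set \<Rightarrow> ('v \<Rightarrow> 'v \<Rightarrow> bool) \<Rightarrow> 'v set set \<Rightarrow> bool" where
  "induced_matching V E N \<longleftrightarrow>
     (\<forall>e\<in>N. \<exists>u v. e = {u, v} \<and> u \<in> V \<and> v \<in> V \<and> E u v) \<and>
     (\<forall>e\<in>N. \<forall>e'\<in>N. e \<noteq> e' \<longrightarrow> e \<inter> e' = {}) \<and>
     (\<forall>u\<in>\<Union>N. \<forall>v\<in>\<Union>N. E u v \<longrightarrow> {u, v} \<in> N)"

definition induced_matching_number :: "'v set \<Rightarrow> ('v \<Rightarrow> 'v \<Rightarrow> bool) \<Rightarrow> nat" where
  "induced_matching_number V E = Max {card N | N. induced_matching V E N}"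

text \<open>A literal is a pair (variable index, polarity); (x, True) is x, (x, False) is its negation.\<close>
type_synonym lit = "nat \<times> bool"
type_synonym clause3 = "lit \<times> lit \<times> lit"

definition neg_lit :: "lit \<Rightarrow> lit" where
  "neg_lit l = (fst l, \<not> snd l)"

definition lit_true :: "(nat \<Rightarrow> bool) \<Rightarrow> lit \<Rightarrow> bool" where
  "lit_true \<sigma> l \<longleftrightarrow> \<sigma> (fst l) = snd l"

definition clause_lit :: "clause3 \<Rightarrow> nat \<Rightarrow> lit" where
  "clause_lit C k = (case C of (a, b, c) \<Rightarrow> if k = 0 then a else if k = 1 then b else c)"

definition clause_sat :: "(nat \<Rightarrow> bool) \<Rightarrow> clause3 \<Rightarrow> bool" where
  "clause_sat \<sigma> C \<longleftrightarrow> (\<exists>k<3. lit_true \<sigma> (clause_lit C k))"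

definition satisfiable :: "clause3 list \<Rightarrow> bool" where
  "satisfiable f \<longleftrightarrow> (\<exists>\<sigma>. \<forall>C\<in>set f. clause_sat \<sigma> C)"

text \<open>Vertex (i,k) with i < m: k = 0,1,2 are x^i, y^i, z^i (the three literal occurrences
  of clause C_i), k = 3 is c^i.\<close>
definition cnf_vertices :: "clause3 list \<Rightarrow> (nat \<times> nat) set" where
  "cnf_vertices f = {(i, k). i < length f \<and> k < 4}"

definition cnf_edge :: "clause3 list \<Rightarrow> nat \<times> nat \<Rightarrow> nat \<times> nat \<Rightarrow> bool" where
  "cnf_edge f u v \<longleftrightarrow> u \<in> cnf_vertices f \<and> v \<in> cnf_vertices f \<and> u \<noteq> v \<and>
     (fst u = fst v \<or>
      (snd u < 3 \<and> snd v < 3 \<and>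
       clause_lit (f ! fst u) (snd u) = neg_lit (clause_lit (f ! fst v) (snd v))))"

end

theory Submission
  imports Defs
begin
definition litV :: "clause3 list \<Rightarrow> (nat \<times> nat) set" where
  "litV f = {(i, k). i < length f \<and> k < 3}"

lemma finite_V: "finite (cnf_vertices f)"
proof -
  have "cnf_vertices f \<subseteq> {..<length f} \<times> {..<4}" by (auto simp: cnf_vertices_def)
  then show ?thesis by (rule finite_subset) auto
qed

lemma edge_irrefl: "\<not> cnf_edge f u u"
  by (simp add: cnf_edge_def)

lemma edge_same: "u \<in> cnf_vertices f \<Longrightarrow> v \<in> cnf_vertices f \<Longrightarrow> u \<noteq> v \<Longrightarrow> fst u = fst v \<Longrightarrow> cnf_edge f u v"
  by (simp add: cnf_edge_def)

lemma edge_c: "cnf_edge f u v \<Longrightarrow> snd u = 3 \<or> snd v = 3 \<Longrightarrow> fst u = fst v"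
  by (auto simp: cnf_edge_def)

lemma indep_inj: "independent_set (cnf_vertices f) (cnf_edge f) I \<Longrightarrow> inj_on fst I"
  unfolding independent_set_def inj_on_def
  by (metis edge_same subsetD)

lemma indep_card: "independent_set (cnf_vertices f) (cnf_edge f) I \<Longrightarrow> card I \<le> length f"
proof -
  assume a: "independent_set (cnf_vertices f) (cnf_edge f) I"
  have "fst ` I \<subseteq> {..<length f}" using a by (auto simp: independent_set_def cnf_vertices_def)
  then have "card (fst ` I) \<le> length f" by (metis card_lessThan card_mono finite_lessThan)
  with indep_inj[OF a] show ?thesis by (simp add: card_image)
qed

lemma indep_C: "independent_set (cnf_vertices f) (cnf_edge f) ((\<lambda>i. (i,3)) ` {..<length f})"
  by (auto simp: independent_set_def cnf_vertices_def cnf_edge_def)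

lemma indep_number_eq: "indep_number (cnf_vertices f) (cnf_edge f) = length f"
  unfolding indep_number_def
proof (rule Max_eqI)
  show "finite {card I |I. independent_set (cnf_vertices f) (cnf_edge f) I}"
  proof (rule finite_subset)
    show "{card I |I. independent_set (cnf_vertices f) (cnf_edge f) I} \<subseteq> card ` Pow (cnf_vertices f)"
      by (auto simp: independent_set_def)
  qed (simp add: finite_V)
  show "\<And>y. y \<in> {card I |I. independent_set (cnf_vertices f) (cnf_edge f) I} \<Longrightarrow> y \<le> length f"
    using indep_card by blast
  have "card ((\<lambda>i. (i,3::nat)) ` {..<length f}) = length f"
    by (subst card_image) (auto simp: inj_on_def)
  then show "length f \<in> {card I |I. independent_set (cnf_vertices f) (cnf_edge f) I}"
    using indep_C by (metis (mono_tags, lifting) mem_Collect_eq)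
qed

lemma C_diss:
  assumes T: "independent_set (cnf_vertices f) (cnf_edge f) T" "T \<subseteq> litV f"
  shows "\<exists>D. dissociation_set (cnf_vertices f) (cnf_edge f) D \<and> card D = length f + card T"
proof -
  let ?C = "(\<lambda>i. (i,3::nat)) ` {..<length f}"
  let ?D = "T \<union> ?C"
  have fT: "finite T" using T finite_V by (meson finite_subset independent_set_def)
  have cC: "card ?C = length f" by (subst card_image) (auto simp: inj_on_def)
  have disj: "T \<inter> ?C = {}" using T(2) by (auto simp: litV_def)
  have card: "card ?D = length f + card T" using card_Un_disjoint[OF fT _ disj] cC by simp
  have VT: "T \<subseteq> cnf_vertices f" using T by (simp add: independent_set_def)
  have DV: "?D \<subseteq> cnf_vertices f" using VT by (auto simp: cnf_vertices_def)
  have inj: "inj_on fst T" using indep_inj[OF T(1)] .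
  have noE: "\<And>u v. u \<in> T \<Longrightarrow> v \<in> T \<Longrightarrow> \<not> cnf_edge f u v" using T(1) by (simp add: independent_set_def)
  have deg: "card {v\<in>?D. cnf_edge f u v} \<le> 1" if u: "u \<in> ?D" for u
  proof -
    have "\<forall>a\<in>{v\<in>?D. cnf_edge f u v}. \<forall>b\<in>{v\<in>?D. cnf_edge f u v}. a = b"
    proof (intro ballI)
      fix a b assume a: "a \<in> {v\<in>?D. cnf_edge f u v}" and b: "b \<in> {v\<in>?D. cnf_edge f u v}"
      show "a = b"
      proof (cases "u \<in> T")
        case True
        then have "a \<notin> T" "b \<notin> T" using noE a b by blast+
        then have "a \<in> ?C" "b \<in> ?C" using a b by auto
        moreover have "snd a = 3" "snd b = 3" using \<open>a \<in> ?C\<close> \<open>b \<in> ?C\<close> by auto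
        moreover have "cnf_edge f u a" "cnf_edge f u b" using a b by auto
        ultimately have "fst a = fst u" "fst b = fst u" using edge_c[of f u a] edge_c[of f u b] by auto
        moreover have "a \<in> ?C" "b \<in> ?C" by fact+
        ultimately show ?thesis by auto
      next
        case False
        then have us: "snd u = 3" using u by auto
        have "cnf_edge f u a" "cnf_edge f u b" using a b by auto
        then have fa: "fst a = fst u" "fst b = fst u" using edge_c[of f u a] edge_c[of f u b] us by auto
        have ueq: "u = (fst u, 3)" using us by (simp add: prod_eq_iff)
        have "a \<noteq> u" "b \<noteq> u" using \<open>cnf_edge f u a\<close> \<open>cnf_edge f u b\<close> edge_irrefl by metis+
        then have "a \<notin> ?C" "b \<notin> ?C" using fa us by (auto simp: prod_eq_iff)
        then have "a \<in> T" "b \<in> T" using a b by auto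
        then show ?thesis using inj fa by (auto simp: inj_on_def)
      qed
    qed
    moreover have fin: "finite {v\<in>?D. cnf_edge f u v}" using fT by auto
    ultimately show ?thesis using card_le_Suc0_iff_eq[OF fin] by (simp only: One_nat_def)
  qed
  have "dissociation_set (cnf_vertices f) (cnf_edge f) ?D" unfolding dissociation_set_def using DV deg by blast
  then show ?thesis using card by blast
qed

lemma C_match:
  assumes T: "independent_set (cnf_vertices f) (cnf_edge f) T" "T \<subseteq> litV f"
  shows "\<exists>N. induced_matching (cnf_vertices f) (cnf_edge f) N \<and> card N = card T"
proof -
  define g where "g t = {t, (fst t, 3::nat)}" for t :: "nat \<times> nat"
  let ?N = "g ` T"
  have VT: "T \<subseteq> cnf_vertices f" using T by (simp add: independent_set_def)
  have inj: "inj_on fst T" using indep_inj[OF T(1)] .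
  have noE: "\<And>u v. u \<in> T \<Longrightarrow> v \<in> T \<Longrightarrow> \<not> cnf_edge f u v" using T(1) by (simp add: independent_set_def)
  have lt: "\<And>t. t \<in> T \<Longrightarrow> snd t < 3 \<and> fst t < length f" using T(2) by (auto simp: litV_def)
  have ginj: "inj_on g T"
  proof (rule inj_onI)
    fix x y assume xy: "x \<in> T" "y \<in> T" "g x = g y"
    have "x \<in> g x" by (simp add: g_def)
    then have "x \<in> g y" using xy(3) by simp
    moreover have "x \<noteq> (fst y, 3)" using lt[OF xy(1)] by auto
    ultimately show "x = y" by (simp add: g_def)
  qed
  have c1: "\<forall>e\<in>?N. \<exists>u v. e = {u, v} \<and> u \<in> cnf_vertices f \<and> v \<in> cnf_vertices f \<and> cnf_edge f u v"
  proof
    fix e assume "e \<in> ?N"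
    then obtain t where t: "t \<in> T" "e = g t" by auto
    have "(fst t, 3) \<in> cnf_vertices f" using lt[OF t(1)] by (simp add: cnf_vertices_def)
    moreover have "t \<noteq> (fst t, 3)" using lt[OF t(1)] by (auto simp: prod_eq_iff)
    moreover have "t \<in> cnf_vertices f" using t VT by auto
    ultimately have "cnf_edge f t (fst t, 3)" using edge_same[of t f "(fst t, 3)"] by simp
    then show "\<exists>u v. e = {u, v} \<and> u \<in> cnf_vertices f \<and> v \<in> cnf_vertices f \<and> cnf_edge f u v"
      using t \<open>t \<in> cnf_vertices f\<close> \<open>(fst t, 3) \<in> cnf_vertices f\<close> unfolding g_def by blast
  qed
  have fdiff: "\<And>t t'. t \<in> T \<Longrightarrow> t' \<in> T \<Longrightarrow> t \<noteq> t' \<Longrightarrow> fst t \<noteq> fst t'"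
    using inj by (auto simp: inj_on_def)
  have c2: "\<forall>e\<in>?N. \<forall>e'\<in>?N. e \<noteq> e' \<longrightarrow> e \<inter> e' = {}"
  proof (intro ballI impI)
    fix e e' assume "e \<in> ?N" "e' \<in> ?N" "e \<noteq> e'"
    then obtain t t' where "t \<in> T" "t' \<in> T" "e = g t" "e' = g t'" "t \<noteq> t'" by auto
    then show "e \<inter> e' = {}" using fdiff[of t t'] lt by (auto simp: g_def)
  qed
  have c3: "\<forall>u\<in>\<Union>?N. \<forall>v\<in>\<Union>?N. cnf_edge f u v \<longrightarrow> {u, v} \<in> ?N"
  proof (intro ballI impI)
    fix u v assume "u \<in> \<Union>?N" "v \<in> \<Union>?N" and e: "cnf_edge f u v"
    then obtain t t' where tt: "t \<in> T" "t' \<in> T" "u \<in> g t" "v \<in> g t'" by auto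
    show "{u, v} \<in> ?N"
    proof (cases "t = t'")
      case True
      have "u \<noteq> v" using e edge_irrefl by metis
      then have "{u,v} = g t" using tt True by (auto simp: g_def)
      then show ?thesis using tt by auto
    next
      case False
      have ft: "fst t \<noteq> fst t'" using fdiff[OF tt(1,2) False] .
      show ?thesis
      proof (cases "u = t \<and> v = t'")
        case True then show ?thesis using noE tt e by auto
      next
        case False
        then have "snd u = 3 \<or> snd v = 3" using tt lt by (auto simp: g_def)
        then have "fst u = fst v" using edge_c e by blast
        moreover have "fst u = fst t" "fst v = fst t'" using tt by (auto simp: g_def)
        ultimately show ?thesis using ft by simp
      qed
    qed
  qed
  have "induced_matching (cnf_vertices f) (cnf_edge f) ?N"
    unfolding induced_matching_def using c1 c2 c3 by blast
  moreover have "card ?N = card T" using ginj by (simp add: card_image)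
  ultimately show ?thesis by blast
qed


lemma D_match:
  assumes N: "induced_matching (cnf_vertices f) (cnf_edge f) N"
  shows "\<exists>T. independent_set (cnf_vertices f) (cnf_edge f) T \<and> T \<subseteq> litV f \<and> card T = card N"
proof -
  have N1: "\<And>e. e \<in> N \<Longrightarrow> \<exists>u v. e = {u, v} \<and> u \<in> cnf_vertices f \<and> v \<in> cnf_vertices f \<and> cnf_edge f u v"
    and N2: "\<And>e e'. e \<in> N \<Longrightarrow> e' \<in> N \<Longrightarrow> e \<noteq> e' \<Longrightarrow> e \<inter> e' = {}"
    and N3: "\<And>u v. u \<in> \<Union>N \<Longrightarrow> v \<in> \<Union>N \<Longrightarrow> cnf_edge f u v \<Longrightarrow> {u, v} \<in> N"
    using N unfolding induced_matching_def by (meson, meson, meson)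
  have ex: "\<exists>x. x \<in> e \<and> x \<in> litV f" if e: "e \<in> N" for e
  proof -
    obtain u v where uv: "e = {u, v}" "u \<in> cnf_vertices f" "v \<in> cnf_vertices f" "cnf_edge f u v"
      using N1[OF e] by blast
    have "snd u < 3 \<or> snd v < 3"
    proof (rule ccontr)
      assume "\<not> (snd u < 3 \<or> snd v < 3)"
      then have "snd u = 3" "snd v = 3" using uv(2,3) by (auto simp: cnf_vertices_def)
      moreover have "fst u = fst v" using edge_c[OF uv(4)] calculation by blast
      ultimately have "u = v" by (simp add: prod_eq_iff)
      then show False using uv(4) edge_irrefl by metis
    qed
    moreover have "u \<in> litV f \<longleftrightarrow> snd u < 3" "v \<in> litV f \<longleftrightarrow> snd v < 3"
      using uv(2,3) by (auto simp: litV_def cnf_vertices_def)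
    ultimately show ?thesis using uv(1) by blast
  qed
  define l where "l e = (SOME x. x \<in> e \<and> x \<in> litV f)" for e
  have l: "l e \<in> e \<and> l e \<in> litV f" if "e \<in> N" for e
    unfolding l_def using someI_ex[OF ex[OF that]] .
  have NV: "\<And>e. e \<in> N \<Longrightarrow> e \<subseteq> cnf_vertices f" using N1 by blast
  have inj: "inj_on l N"
  proof (rule inj_onI)
    fix e e' assume "e \<in> N" "e' \<in> N" "l e = l e'"
    then have "l e \<in> e \<inter> e'" using l[OF \<open>e \<in> N\<close>] l[OF \<open>e' \<in> N\<close>] by simp
    then show "e = e'" using N2 \<open>e \<in> N\<close> \<open>e' \<in> N\<close> by blast
  qed
  let ?T = "l ` N"
  have TL: "?T \<subseteq> litV f" using l by blast
  have TV: "?T \<subseteq> cnf_vertices f" using l NV by blast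
  have noE: "\<not> cnf_edge f a b" if ab0: "a \<in> ?T" "b \<in> ?T" for a b
  proof
    assume ab: "cnf_edge f a b"
    obtain e e' where ee: "e \<in> N" "e' \<in> N" "a = l e" "b = l e'" using ab0 by blast
    have "a \<in> e" "b \<in> e'" using l ee by auto
    then have "a \<in> \<Union>N" "b \<in> \<Union>N" using ee by auto
    then have ab': "{a,b} \<in> N" using N3 ab by blast
    have "{a,b} = e" using N2[OF ab' ee(1)] \<open>a \<in> e\<close> by blast
    moreover have "{a,b} = e'" using N2[OF ab' ee(2)] \<open>b \<in> e'\<close> by blast
    ultimately have "a = b" using ee by simp
    then show False using ab edge_irrefl by metis
  qed
  have "independent_set (cnf_vertices f) (cnf_edge f) ?T"
    unfolding independent_set_def using TV noE by blast
  moreover have "card ?T = card N" using inj by (simp add: card_image)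
  ultimately show ?thesis using TL by blast
qed

lemma E_diss:
  assumes D: "dissociation_set (cnf_vertices f) (cnf_edge f) D"
  shows "\<exists>T. independent_set (cnf_vertices f) (cnf_edge f) T \<and> T \<subseteq> litV f \<and> card D \<le> length f + card T"
proof -
  have DV: "D \<subseteq> cnf_vertices f" and deg: "\<And>u. u \<in> D \<Longrightarrow> card {v\<in>D. cnf_edge f u v} \<le> 1"
    using D unfolding dissociation_set_def by blast+
  have finD: "finite D" using DV finite_V finite_subset by blast
  have two: False if "u \<in> D" "v \<in> D" "w \<in> D" "v \<noteq> w" "cnf_edge f u v" "cnf_edge f u w" for u v w
  proof -
    have "{v, w} \<subseteq> {x\<in>D. cnf_edge f u x}" using that by auto
    then have "card {v, w} \<le> card {x\<in>D. cnf_edge f u x}" using finD by (intro card_mono) auto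
    then show False using deg[OF that(1)] that(4) by simp
  qed
  define Di where "Di i = {x\<in>D. fst x = i}" for i
  have Di_edge: "cnf_edge f a b" if "a \<in> Di i" "b \<in> Di i" "a \<noteq> b" for a b i
    using that DV edge_same[of a f b] unfolding Di_def by auto
  have finDi: "finite (Di i)" for i using finD unfolding Di_def by auto
  have partner: "\<exists>w\<in>Di i. w \<noteq> a" if "a \<in> Di i" "2 \<le> card (Di i)" for a i
  proof (rule ccontr)
    assume "\<not> ?thesis"
    then have "Di i \<subseteq> {a}" by auto
    then have "card (Di i) \<le> 1" using card_mono[of "{a}" "Di i"] by simp
    then show False using that by simp
  qed
  have le2: "card (Di i) \<le> 2" for i
  proof (rule ccontr)
    assume "\<not> ?thesis"
    then have c: "3 \<le> card (Di i)" by simp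
    then have "Di i \<noteq> {}" by (metis card.empty not_numeral_le_zero)
    then obtain a where a: "a \<in> Di i" by blast
    have "card (Di i - {a}) \<ge> 2" using c a finDi by (simp add: card_Diff_singleton)
    then have "\<not> card (Di i - {a}) \<le> Suc 0" by simp
    then obtain v w where vw: "v \<in> Di i - {a}" "w \<in> Di i - {a}" "v \<noteq> w"
      using card_le_Suc0_iff_eq[of "Di i - {a}"] finDi by blast
    have "cnf_edge f a v" "cnf_edge f a w" using Di_edge[OF a, of v] Di_edge[OF a, of w] vw by blast+
    moreover have "a \<in> D" "v \<in> D" "w \<in> D" using a vw unfolding Di_def by auto
    ultimately show False using two vw(3) by blast
  qed
  define S where "S = {i\<in>{..<length f}. 2 \<le> card (Di i)}"
  have exl: "\<exists>x. x \<in> Di i \<and> snd x < 3" if "i \<in> S" for i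
  proof -
    have c: "2 \<le> card (Di i)" using that unfolding S_def by simp
    then have "Di i \<noteq> {}" by (metis card.empty not_numeral_le_zero)
    then obtain a where a: "a \<in> Di i" by blast
    obtain w where w: "w \<in> Di i" "w \<noteq> a" using partner[OF a c] by blast
    have "a \<in> cnf_vertices f" "w \<in> cnf_vertices f" using a w DV unfolding Di_def by auto
    then have "snd a < 4" "snd w < 4" by (auto simp: cnf_vertices_def)
    moreover have "fst a = fst w" using a w unfolding Di_def by simp
    ultimately have "snd a < 3 \<or> snd w < 3" using w(2) by (auto simp: prod_eq_iff)
    then show ?thesis using a w by blast
  qed
  define t where "t i = (SOME x. x \<in> Di i \<and> snd x < 3)" for i
  have t: "t i \<in> Di i \<and> snd (t i) < 3" if "i \<in> S" for i
    unfolding t_def using someI_ex[OF exl[OF that]] .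
  have tD: "t i \<in> D" "fst (t i) = i" if "i \<in> S" for i using t[OF that] unfolding Di_def by auto
  let ?T = "t ` S"
  have inj: "inj_on t S" by (rule inj_onI) (metis tD(2))
  have TV: "?T \<subseteq> cnf_vertices f" using tD DV by blast
  have TL: "?T \<subseteq> litV f"
  proof
    fix x assume "x \<in> ?T"
    then obtain i where i: "i \<in> S" "x = t i" by blast
    have "x \<in> cnf_vertices f" using TV i by blast
    then show "x \<in> litV f" using t[OF i(1)] i(2) by (auto simp: cnf_vertices_def litV_def)
  qed
  have noE: "\<not> cnf_edge f a b" if ab0: "a \<in> ?T" "b \<in> ?T" for a b
  proof
    assume ab: "cnf_edge f a b"
    obtain i j where ij: "i \<in> S" "j \<in> S" "a = t i" "b = t j" using ab0 by blast
    have "i \<noteq> j" using ab ij edge_irrefl by metis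
    have aDi: "a \<in> Di i" using t ij by auto
    have c: "2 \<le> card (Di i)" using ij unfolding S_def by simp
    obtain w where w: "w \<in> Di i" "w \<noteq> a" using partner[OF aDi c] by blast
    have "cnf_edge f a w" using Di_edge[OF aDi w(1)] w(2) by blast
    moreover have "w \<noteq> b" using w \<open>i \<noteq> j\<close> tD ij unfolding Di_def by auto
    moreover have "a \<in> D" "b \<in> D" "w \<in> D" using tD ij w unfolding Di_def by auto
    ultimately show False using two ab by blast
  qed
  have indep: "independent_set (cnf_vertices f) (cnf_edge f) ?T"
    unfolding independent_set_def using TV noE by blast
  have cT: "card ?T = card S" using inj by (simp add: card_image)
  have "D = (\<Union>i\<in>{..<length f}. Di i)" using DV unfolding Di_def by (auto simp: cnf_vertices_def)
  then have "card D \<le> (\<Sum>i<length f. card (Di i))" using card_UN_le[of "{..<length f}" Di] by simp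
  also have "\<dots> \<le> (\<Sum>i<length f. 1 + of_bool (i \<in> S))"
  proof (rule sum_mono)
    fix i assume "i \<in> {..<length f}"
    then show "card (Di i) \<le> 1 + of_bool (i \<in> S)" using le2[of i] unfolding S_def by auto
  qed
  also have "\<dots> = length f + card S"
  proof -
    have "(\<Sum>i<length f. 1 + of_bool (i \<in> S)) = (\<Sum>i<length f. (1::nat)) + (\<Sum>i<length f. of_bool (i \<in> S))"
      by (rule sum.distrib)
    moreover have "{..<length f} \<inter> {x. x \<in> S} = S" unfolding S_def by auto
    ultimately show ?thesis by (simp only: sum_of_bool_eq finite_lessThan) simp
  qed
  finally show ?thesis using indep TL cT by auto
qed

lemma F_sat1:
  assumes "satisfiable f"
  shows "\<exists>T. independent_set (cnf_vertices f) (cnf_edge f) T \<and> T \<subseteq> litV f \<and> card T = length f"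
proof -
  obtain \<sigma> where s: "\<forall>C\<in>set f. clause_sat \<sigma> C" using assms unfolding satisfiable_def by blast
  have ex: "\<exists>k<3. lit_true \<sigma> (clause_lit (f ! i) k)" if "i < length f" for i
    using s that unfolding clause_sat_def by auto
  define kk where "kk i = (SOME k. k < 3 \<and> lit_true \<sigma> (clause_lit (f ! i) k))" for i
  have kk: "kk i < 3 \<and> lit_true \<sigma> (clause_lit (f ! i) (kk i))" if "i < length f" for i
    unfolding kk_def using someI_ex[OF ex[OF that]] by blast
  let ?T = "(\<lambda>i. (i, kk i)) ` {..<length f}"
  have TL: "?T \<subseteq> litV f" using kk by (auto simp: litV_def)
  have TV: "?T \<subseteq> cnf_vertices f" using kk by (fastforce simp: cnf_vertices_def)
  have noE: "\<not> cnf_edge f a b" if ab0: "a \<in> ?T" "b \<in> ?T" for a b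
  proof
    assume ab: "cnf_edge f a b"
    obtain i j where ij: "i < length f" "j < length f" "a = (i, kk i)" "b = (j, kk j)" using ab0 by blast
    have "i \<noteq> j" using ab ij edge_irrefl by metis
    then have "clause_lit (f ! i) (kk i) = neg_lit (clause_lit (f ! j) (kk j))"
      using ab ij unfolding cnf_edge_def by auto
    then show False using kk[OF ij(1)] kk[OF ij(2)] by (auto simp: lit_true_def neg_lit_def)
  qed
  have "independent_set (cnf_vertices f) (cnf_edge f) ?T"
    unfolding independent_set_def using TV noE by blast
  moreover have "card ?T = length f" by (subst card_image) (auto simp: inj_on_def)
  ultimately show ?thesis using TL by blast
qed

lemma F_sat2:
  assumes T: "independent_set (cnf_vertices f) (cnf_edge f) T" "T \<subseteq> litV f" "card T = length f"
  shows "satisfiable f"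
proof -
  have inj: "inj_on fst T" using indep_inj[OF T(1)] .
  have noE: "\<And>u v. u \<in> T \<Longrightarrow> v \<in> T \<Longrightarrow> \<not> cnf_edge f u v" using T(1) by (simp add: independent_set_def)
  have sub: "fst ` T \<subseteq> {..<length f}" using T(2) by (auto simp: litV_def)
  have "card (fst ` T) = length f" using inj T(3) by (simp add: card_image)
  then have eq: "fst ` T = {..<length f}" using sub by (simp add: card_subset_eq)
  define \<sigma> where "\<sigma> x = (\<exists>t\<in>T. clause_lit (f ! fst t) (snd t) = (x, True))" for x
  show ?thesis unfolding satisfiable_def
  proof (intro exI ballI)
    fix C assume "C \<in> set f"
    then obtain i where i: "i < length f" "C = f ! i" by (metis in_set_conv_nth)
    then obtain t where t: "t \<in> T" "fst t = i" using eq by (metis imageE lessThan_iff)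
    have k3: "snd t < 3" using t T(2) by (auto simp: litV_def)
    let ?l = "clause_lit C (snd t)"
    have "lit_true \<sigma> ?l"
    proof (cases "snd ?l")
      case True
      then have "\<sigma> (fst ?l)" unfolding \<sigma>_def using t i by (metis prod.collapse)
      then show ?thesis using True by (simp add: lit_true_def)
    next
      case False
      have "\<not> \<sigma> (fst ?l)"
      proof
        assume "\<sigma> (fst ?l)"
        then obtain t' where t': "t' \<in> T" "clause_lit (f ! fst t') (snd t') = (fst ?l, True)"
          unfolding \<sigma>_def by blast
        have ne: "t \<noteq> t'"
        proof
          assume "t = t'"
          then have "?l = (fst ?l, True)" using t'(2) t i by simp
          then have "snd ?l" by (metis snd_conv)
          then show False using False by simp
        qed
        have "t \<in> cnf_vertices f" "t' \<in> cnf_vertices f" using t t' T(1) by (auto simp: independent_set_def)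
        moreover have "snd t' < 3" using t' T(2) by (auto simp: litV_def)
        moreover have "clause_lit (f ! fst t) (snd t) = neg_lit (clause_lit (f ! fst t') (snd t'))"
          using t' False t i by (simp add: neg_lit_def prod_eq_iff)
        ultimately have "cnf_edge f t t'" using ne k3 unfolding cnf_edge_def by blast
        then show False using noE t(1) t'(1) by blast
      qed
      then show ?thesis using False by (simp add: lit_true_def)
    qed
    then show "clause_sat \<sigma> C" unfolding clause_sat_def using k3 by blast
  qed
qed

lemma nu_eq:
  "induced_matching_number (cnf_vertices f) (cnf_edge f) \<le> length f \<and>
   diss (cnf_vertices f) (cnf_edge f) = length f + induced_matching_number (cnf_vertices f) (cnf_edge f) \<and>
   (satisfiable f \<longleftrightarrow> induced_matching_number (cnf_vertices f) (cnf_edge f) = length f)"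
proof -
  let ?V = "cnf_vertices f" and ?E = "cnf_edge f"
  let ?DS = "{card I |I. dissociation_set ?V ?E I}"
  let ?NS = "{card N |N. induced_matching ?V ?E N}"
  have finDS: "finite ?DS"
    by (rule finite_subset[of _ "card ` Pow ?V"]) (auto simp: dissociation_set_def finite_V)
  have "?NS \<subseteq> card ` Pow (Pow ?V)"
  proof
    fix x assume "x \<in> ?NS"
    then obtain N where N: "induced_matching ?V ?E N" "x = card N" by blast
    have "N \<subseteq> Pow ?V" using N(1) unfolding induced_matching_def by fastforce
    then show "x \<in> card ` Pow (Pow ?V)" using N(2) by blast
  qed
  then have finNS: "finite ?NS" by (rule finite_subset) (simp add: finite_V)
  have "dissociation_set ?V ?E {}" by (simp add: dissociation_set_def)
  then have neDS: "?DS \<noteq> {}" by blast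
  have "induced_matching ?V ?E {}" by (simp add: induced_matching_def)
  then have neNS: "?NS \<noteq> {}" by blast
  obtain D0 where D0: "dissociation_set ?V ?E D0" "card D0 = diss ?V ?E"
    using Max_in[OF finDS neDS] unfolding diss_def by auto
  obtain N0 where N0: "induced_matching ?V ?E N0" "card N0 = induced_matching_number ?V ?E"
    using Max_in[OF finNS neNS] unfolding induced_matching_number_def by auto
  have Dle: "card D \<le> diss ?V ?E" if "dissociation_set ?V ?E D" for D
    unfolding diss_def using that finDS by (intro Max_ge) auto
  have Nle: "card N \<le> induced_matching_number ?V ?E" if "induced_matching ?V ?E N" for N
    unfolding induced_matching_number_def using that finNS by (intro Max_ge) auto
  have Tle: "card T \<le> induced_matching_number ?V ?E" if "independent_set ?V ?E T" "T \<subseteq> litV f" for T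
    using C_match[OF that] Nle by metis
  obtain T1 where T1: "independent_set ?V ?E T1" "T1 \<subseteq> litV f" "card T1 = induced_matching_number ?V ?E"
    using D_match[OF N0(1)] N0(2) by metis
  obtain T0 where T0: "independent_set ?V ?E T0" "T0 \<subseteq> litV f" "card D0 \<le> length f + card T0"
    using E_diss[OF D0(1)] by blast
  have a: "induced_matching_number ?V ?E \<le> length f" using indep_card[OF T1(1)] T1(3) by simp
  have "diss ?V ?E \<le> length f + induced_matching_number ?V ?E" using T0 Tle D0(2) by fastforce
  moreover have "length f + induced_matching_number ?V ?E \<le> diss ?V ?E"
    using C_diss[OF T1(1,2)] Dle T1(3) by metis
  ultimately have b: "diss ?V ?E = length f + induced_matching_number ?V ?E" by simp
  have c: "satisfiable f \<longleftrightarrow> induced_matching_number ?V ?E = length f"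
  proof
    assume "satisfiable f"
    then obtain T where "independent_set ?V ?E T" "T \<subseteq> litV f" "card T = length f" using F_sat1 by blast
    then show "induced_matching_number ?V ?E = length f" using Tle a by fastforce
  next
    assume "induced_matching_number ?V ?E = length f"
    then show "satisfiable f" using F_sat2[OF T1(1,2)] T1(3) by simp
  qed
  show ?thesis using a b c by blast
qed

theorem mainTheorem8:
  fixes f :: "clause3 list" and n :: nat
  assumes "\<forall>C\<in>set f. \<forall>k<3. fst (clause_lit C k) \<in> {1..n}"
  defines "V \<equiv> cnf_vertices f" and "E \<equiv> cnf_edge f"
  shows "indep_number V E = length f
    \<and> diss V E = indep_number V E + induced_matching_number V E
    \<and> (satisfiable f \<longleftrightarrow> diss V E = 2 * indep_number V E)
    \<and> (diss V E = 2 * indep_number V E \<longleftrightarrow> diss V E = 2 * induced_matching_number V E)"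
  unfolding V_def E_def using nu_eq[of f] indep_number_eq[of f] by auto

end
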